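(* Let $G$ be a graph on vertex set $V=\{1,\ldots,n\}$ and let $G_l$ be a graph on $V$ with $E(G)\subseteq E(G_l)$. Suppose $A\in\mathcal{S}(G)$, $X\in\overline{\mathcal{S}_0}(G_l^c)$, and $AX-XA=0$. If for some pairwise distinct vertices $i,j,k$ with $k\in N_G[i]$ the pair $\{i,j\}$ is focused on $\{k\}$ with respect to $G$ and $G_l$, then $X\in\overline{\mathcal{S}_0}(G_{l+1}^c)$, where $G_{l+1}=G_l+\{j,k\}$ is obtained from $G_l$ by adding the edge $\{j,k\}$.
   Context: All graphs are finite, simple, undirected. For a graph $G$ on $\{1,\ldots,n\}$, $\mathcal{S}(G)$ is the set of real symmetric $n\times n$ matrices $A=(a_{ij})$ with $a_{ij}\neq0$ iff $\{i,j\}\in E(G)$ for $i\neq j$ (diagonal arbitrary). For a graph $H$ on $\{1,\ldots,n\}$, $\overline{\mathcal{S}_0}(H)$ is the set of real symmetric $n\times n$ matrices whose $(i,j)$ entry is zero whenever $i=j$ or $\{i,j\}\notin E(H)$; thus $X\in\overline{\mathcal{S}_0}(G_l^c)$ means $X$ is real symmetric with zero diagonal and $x_{ij}=0$ whenever $\{i,j\}\in E(G_l)$ ($G_l^c$ is the complement). $N_G[v]$ is the closed neighbourhood of $v$ in $G$ (vertices at distance at most 1 from $v$), and $N_G[v]^c$ denotes its complement in the vertex set. For a nonempty $U\subseteq V$, a pair $\{i,j\}$ is focused on $U$ with respect to $G$ and $G_l$ if $N_G[i]\cap N_{G_l}[j]^c\subseteq U$ and $N_G[j]\cap N_{G_l}[i]^c\subseteq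 U$. *)

theory Defs
  imports "HOL-Analysis.Analysis"
begin

text \<open>A finite simple graph on the vertex set UNIV of a finite type 'n, given by its
  adjacency relation (symmetric and irreflexive). The vertex type plays the role of {1..n}.\<close>

definition simple_graph :: "('n \<Rightarrow> 'n \<Rightarrow> bool) \<Rightarrow> bool" where
  "simple_graph G \<longleftrightarrow> (\<forall>a b. G a b \<longrightarrow> G b a) \<and> (\<forall>a. \<not> G a a)"

definition compl_graph :: "('n \<Rightarrow> 'n \<Rightarrow> bool) \<Rightarrow> 'n \<Rightarrow> 'n \<Rightarrow> bool" where
  "compl_graph G a b \<longleftrightarrow> a \<noteq> b \<and> \<not> G a b"

definition add_edge :: "('n \<Rightarrow> 'n \<Rightarrow> bool) \<Rightarrow> 'n \<Rightarrow> 'n \<Rightarrow> 'n \<Rightarrow> 'n \<Rightarrow> bool" where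
  "add_edge G j k a b \<longleftrightarrow> G a b \<or> {a, b} = {j, k}"

definition closed_nbhd :: "('n \<Rightarrow> 'n \<Rightarrow> bool) \<Rightarrow> 'n \<Rightarrow> 'n set" where
  "closed_nbhd G v = {u. u = v \<or> G v u}"

definition S_graph :: "('n::finite \<Rightarrow> 'n \<Rightarrow> bool) \<Rightarrow> (real^'n^'n) set" where
  "S_graph G = {A. transpose A = A \<and> (\<forall>i j. i \<noteq> j \<longrightarrow> (A $ i $ j \<noteq> 0 \<longleftrightarrow> G i j))}"

definition S0_bar :: "('n::finite \<Rightarrow> 'n \<Rightarrow> bool) \<Rightarrow> (real^'n^'n) set" where
  "S0_bar H = {X. transpose X = X \<and> (\<forall>i j. (i = j \<or> \<not> H i j) \<longrightarrow> X $ i $ j = 0)}"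

definition focused :: "('n \<Rightarrow> 'n \<Rightarrow> bool) \<Rightarrow> ('n \<Rightarrow> 'n \<Rightarrow> bool) \<Rightarrow> 'n set \<Rightarrow> 'n \<Rightarrow> 'n \<Rightarrow> bool" where
  "focused G Gl U i j \<longleftrightarrow>
     closed_nbhd G i \<inter> - closed_nbhd Gl j \<subseteq> U \<and> closed_nbhd G j \<inter> - closed_nbhd Gl i \<subseteq> U"

end

theory Submission
  imports Defs
begin

lemma sym_entry:
  fixes M :: "real^'n^'n"
  assumes "transpose M = M"
  shows "M $ a $ b = M $ b $ a"
proof -
  have "transpose M $ b $ a = M $ a $ b" unfolding transpose_def by simp
  then show ?thesis using assms by simp
qed

lemma sum_single_nz:
  fixes f :: "'n::finite \<Rightarrow> real"
  assumes "\<And>t. t \<noteq> k \<Longrightarrow> f t = 0"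
  shows "sum f UNIV = f k"
proof -
  have "sum f UNIV = f k + sum f (UNIV - {k})"
    by (simp add: sum.remove)
  also have "sum f (UNIV - {k}) = 0" using assms by (intro sum.neutral) auto
  finally show ?thesis by simp
qed

theorem lemma3p3:
  fixes G Gl :: "'n::finite \<Rightarrow> 'n \<Rightarrow> bool"
    and A X :: "real^'n^'n"
    and i j k :: 'n
  assumes "simple_graph G" and "simple_graph Gl"
    and "\<forall>a b. G a b \<longrightarrow> Gl a b"
    and "A \<in> S_graph G"
    and "X \<in> S0_bar (compl_graph Gl)"
    and "A ** X - X ** A = 0"
    and "i \<noteq> j" and "j \<noteq> k" and "i \<noteq> k"
    and "k \<in> closed_nbhd G i"
    and "focused G Gl {k} i j"
  shows "X \<in> S0_bar (compl_graph (add_edge Gl j k))"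
proof -
  have symX: "\<And>a b. X $ a $ b = X $ b $ a"
    using assms(5) sym_entry unfolding S0_bar_def by blast
  have X0: "\<And>a b. a = b \<or> Gl a b \<Longrightarrow> X $ a $ b = 0"
    using assms(5) unfolding S0_bar_def compl_graph_def by auto
  have A0: "\<And>a b. a \<noteq> b \<Longrightarrow> A $ a $ b \<noteq> 0 \<longleftrightarrow> G a b"
    using assms(4) unfolding S_graph_def by auto
  have Gik: "G i k" using assms(10) assms(9) unfolding closed_nbhd_def by auto
  have foc1: "\<And>t. (t = i \<or> G i t) \<Longrightarrow> \<not> (t = j \<or> Gl j t) \<Longrightarrow> t = k"
    using assms(11) unfolding focused_def closed_nbhd_def by auto
  have foc2: "\<And>t. (t = j \<or> G j t) \<Longrightarrow> \<not> (t = i \<or> Gl i t) \<Longrightarrow> t = k"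
    using assms(11) unfolding focused_def closed_nbhd_def by auto
  have symGl: "\<And>a b. Gl a b \<Longrightarrow> Gl b a" using assms(2) unfolding simple_graph_def by blast
  have e: "(A ** X) $ i $ j = (X ** A) $ i $ j"
  proof -
    have "A ** X = X ** A" using assms(6) by (simp only: right_minus_eq)
    then show ?thesis by (simp only:)
  qed
  have L0: "(A ** X) $ i $ j = (\<Sum>t\<in>UNIV. A $ i $ t * X $ t $ j)"
    by (simp add: matrix_matrix_mult_def)
  have L: "(A ** X) $ i $ j = A $ i $ k * X $ k $ j"
    unfolding L0
  proof (rule sum_single_nz[where f="\<lambda>t. A $ i $ t * X $ t $ j" and k=k])
    fix t assume "t \<noteq> k"
    show "A $ i $ t * X $ t $ j = 0"
    proof (cases "t = i \<or> G i t")
      case True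
      then have "t = j \<or> Gl j t" using foc1[of t] \<open>t \<noteq> k\<close> by blast
      then have "t = j \<or> Gl t j" using symGl[of j t] by blast
      then have "X $ t $ j = 0" using X0[of t j] by blast
      then show ?thesis by (simp only: mult_zero_right)
    next
      case False
      then have "A $ i $ t = 0" using A0[of i t] by auto
      then show ?thesis by (simp only: mult_zero_left)
    qed
  qed
  have R0: "(X ** A) $ i $ j = (\<Sum>t\<in>UNIV. X $ i $ t * A $ t $ j)"
    by (simp add: matrix_matrix_mult_def)
  have R: "(X ** A) $ i $ j = X $ i $ k * A $ k $ j"
    unfolding R0
  proof (rule sum_single_nz[where f="\<lambda>t. X $ i $ t * A $ t $ j" and k=k])
    fix t assume "t \<noteq> k"
    show "X $ i $ t * A $ t $ j = 0"
    proof (cases "t = j \<or> G j t")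
      case True
      then have "t = i \<or> Gl i t" using foc2[of t] \<open>t \<noteq> k\<close> by blast
      then have "X $ i $ t = 0" using X0[of i t] by blast
      then show ?thesis by (simp only: mult_zero_left)
    next
      case False
      have "A $ t $ j = A $ j $ t"
        using assms(4) sym_entry[of A t j] unfolding S_graph_def by blast
      then have "A $ t $ j = 0" using A0[of j t] False by auto
      then show ?thesis by (simp only: mult_zero_right)
    qed
  qed
  have Xik: "X $ i $ k = 0" using X0[of i k] assms(3) Gik by blast
  have Aik: "A $ i $ k \<noteq> 0" using A0[of i k] Gik assms(9) by blast
  have "A $ i $ k * X $ k $ j = X $ i $ k * A $ k $ j" using e L R by (simp only:)
  also have "\<dots> = 0" unfolding Xik by (rule mult_zero_left)
  finally have "A $ i $ k * X $ k $ j = 0" .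
  then have Xkj: "X $ k $ j = 0" using Aik by (simp only: mult_eq_0_iff) blast
  show ?thesis
    unfolding S0_bar_def
  proof (intro CollectI conjI allI impI)
    show "transpose X = X" using assms(5) unfolding S0_bar_def by simp
  next
    fix a b assume h: "a = b \<or> \<not> compl_graph (add_edge Gl j k) a b"
    then have "a = b \<or> Gl a b \<or> {a, b} = {j, k}"
      unfolding compl_graph_def add_edge_def by auto
    moreover have "{a, b} = {j, k} \<Longrightarrow> X $ a $ b = 0"
    proof -
      assume "{a, b} = {j, k}"
      then have "(a = j \<and> b = k) \<or> (a = k \<and> b = j)" by (auto simp: doubleton_eq_iff)
      then show ?thesis using Xkj symX by metis
    qed
    ultimately show "X $ a $ b = 0" using X0 by blast
  qed
qed

end
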